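(* Under the standing assumptions, $\sum_{n\eta_3\le S\le n}\Phi(S)=o(1)$ as $n\to\infty$, the sum being over integers $S$.
   Context: Parameters: integer $k\ge2$, constants $\alpha>0$, $r>0$, $0<p<1$; $d=n^{\alpha}$ (treated as an integer), $m=n\ln d$, $\tau=\frac1{1-p}$, $r_{cr}=\frac1{\ln\tau}$. Standing assumptions: $(2k-1)\alpha>1$, $k\alpha\le1$, $k\ge\frac{\tau\ln\tau}{\tau-1}$, and $r<r_{cr}$. Notation: $f(s)=1+\frac{p}{1-p}\cdot\frac{s^k-d^{-k}}{1-d^{-k}}$ for $s\in[0,1]$; $B(S)=\binom{n}{S}\left(\frac1d\right)^{S}\left(1-\frac1d\right)^{n-S}$; $W(S)=f(S/n)^{rm}$; $\Phi(S)=B(S)W(S)$. Let $\alpha_0=\frac{(2k-1)\alpha-1}{2(k-1)}$, and let $\eta_2,\eta_3,\mu$ be constants with $0<\eta_2<\eta_3<1$, $\alpha_0/\alpha-\mu\eta_2^{k-1}>0$, $\mu>\frac{kpr}{1-p}$, and $r\ln(1-p)+\eta_3>0$. *)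

theory Defs
  imports Complex_Main
begin

definition dd :: "real \<Rightarrow> nat \<Rightarrow> real" where
  "dd \<alpha> n = real n powr \<alpha>"

definition mm :: "real \<Rightarrow> nat \<Rightarrow> real" where
  "mm \<alpha> n = real n * ln (dd \<alpha> n)"

definition ff :: "nat \<Rightarrow> real \<Rightarrow> real \<Rightarrow> nat \<Rightarrow> real \<Rightarrow> real" where
  "ff k \<alpha> p n s = 1 + p / (1 - p) * ((s ^ k - (1 / dd \<alpha> n) ^ k) / (1 - (1 / dd \<alpha> n) ^ k))"

definition BB :: "real \<Rightarrow> nat \<Rightarrow> nat \<Rightarrow> real" where
  "BB \<alpha> n S = real (n choose S) * (1 / dd \<alpha> n) ^ S * (1 - 1 / dd \<alpha> n) ^ (n - S)"

definition WW :: "nat \<Rightarrow> real \<Rightarrow> real \<Rightarrow> real \<Rightarrow> nat \<Rightarrow> nat \<Rightarrow> real" where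
  "WW k \<alpha> r p n S = ff k \<alpha> p n (real S / real n) powr (r * mm \<alpha> n)"

definition Phi :: "nat \<Rightarrow> real \<Rightarrow> real \<Rightarrow> real \<Rightarrow> nat \<Rightarrow> nat \<Rightarrow> real" where
  "Phi k \<alpha> r p n S = BB \<alpha> n S * WW k \<alpha> r p n S"

end

theory Submission
  imports Defs "HOL-Real_Asymp.Real_Asymp"
begin

lemma term_bound:
  fixes k n S :: nat and \<alpha> r p \<eta>3 :: real
  assumes p: "0 < p" "p < 1" and r: "r > 0" and n: "n > 0"
    and d1: "dd \<alpha> n \<ge> 1" and d2: "1 / dd \<alpha> n \<le> \<eta>3"
    and S1: "real n * \<eta>3 \<le> real S" and S2: "S \<le> n"
  shows "Phi k \<alpha> r p n S \<le> 2 ^ n * exp (- ((\<eta>3 - r * ln (1 / (1 - p))) * real n * ln (dd \<alpha> n)))"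
    and "0 \<le> Phi k \<alpha> r p n S"
proof -
  define d where "d = dd \<alpha> n"
  define e where "e = (1 / d) ^ k"
  define s where "s = real S / real n"
  have dpos: "d > 0" using d1 d_def by simp
  have e0: "0 \<le> e" using dpos e_def by simp
  have e1: "e \<le> 1" unfolding e_def using d1 d_def by (simp add: power_le_one)
  have s1: "s \<le> 1" using S2 n s_def by simp
  have s0: "s \<ge> \<eta>3" using S1 n unfolding s_def by (simp add: le_divide_eq mult.commute)
  have s1d: "1 / d \<le> s" using d2 s0 d_def by simp
  have sk: "e \<le> s ^ k" unfolding e_def using s1d dpos by (intro power_mono) auto
  have sk1: "s ^ k \<le> 1" using s1 s1d dpos
    by (meson less_le_trans power_le_one_iff zero_less_divide_1_iff less_imp_le)
  have q0: "0 \<le> (s ^ k - e) / (1 - e)" using sk e1 by simp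
  have q1: "(s ^ k - e) / (1 - e) \<le> 1"
    using sk sk1 e1 by (cases "e = 1") (auto simp: divide_le_eq)
  have f_eq: "ff k \<alpha> p n s = 1 + p / (1 - p) * ((s ^ k - e) / (1 - e))"
    unfolding ff_def e_def d_def by simp
  have f1: "ff k \<alpha> p n s \<ge> 1"
  proof -
    have "0 \<le> p / (1 - p) * ((s ^ k - e) / (1 - e))" using q0 p by (intro mult_nonneg_nonneg) auto
    then show ?thesis using f_eq by linarith
  qed
  have f2: "ff k \<alpha> p n s \<le> 1 / (1 - p)"
  proof -
    have "p / (1 - p) * ((s ^ k - e) / (1 - e)) \<le> p / (1 - p)"
      using q1 p mult_left_le[of "(s ^ k - e) / (1 - e)" "p / (1 - p)"] by (simp del: times_divide_eq_left times_divide_eq_right)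
    then show ?thesis using f_eq p by (simp add: field_simps)
  qed
  have m0: "0 \<le> r * mm \<alpha> n" unfolding mm_def using r d1 by simp
  have W0: "0 \<le> WW k \<alpha> r p n S" unfolding WW_def by simp
  have Wb: "WW k \<alpha> r p n S \<le> (1 / (1 - p)) powr (r * mm \<alpha> n)"
    unfolding WW_def s_def[symmetric] using powr_mono2[OF m0 _ f2] f1 by simp
  have Wb2: "(1 / (1 - p)) powr (r * mm \<alpha> n) = exp (r * real n * ln d * ln (1 / (1 - p)))"
    using p unfolding mm_def d_def powr_def by simp
  have B0: "0 \<le> BB \<alpha> n S" unfolding BB_def using d1 by simp
  have Bb: "BB \<alpha> n S \<le> 2 ^ n * exp (- (\<eta>3 * real n * ln d))"
  proof -
    have c: "real (n choose S) \<le> 2 ^ n"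
      using binomial_le_pow2[of n S] by (metis of_nat_le_iff of_nat_numeral of_nat_power)
    have "(1 / d) ^ S = exp (- (real S * ln d))"
      proof -
      have "exp (real S * ln d) = d ^ S" using dpos by (metis exp_ln exp_of_nat_mult)
      then show ?thesis by (simp add: exp_minus power_one_over divide_inverse power_inverse)
    qed
    also have "\<dots> \<le> exp (- (\<eta>3 * real n * ln d))"
      using S1 d1 d_def by (simp add: mult_right_mono mult.commute)
    finally have a: "(1 / d) ^ S \<le> exp (- (\<eta>3 * real n * ln d))" .
    have b: "(1 - 1 / d) ^ (n - S) \<le> 1" using d1 d_def dpos
      by (intro power_le_one) (auto simp: field_simps)
    have b0: "0 \<le> (1 - 1 / d) ^ (n - S)" using d1 d_def by simp
    have "BB \<alpha> n S = real (n choose S) * (1 / d) ^ S * (1 - 1 / d) ^ (n - S)"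
      unfolding BB_def d_def by simp
    also have "\<dots> \<le> 2 ^ n * exp (- (\<eta>3 * real n * ln d)) * 1"
      using c a b b0 dpos by (intro mult_mono) auto
    finally show ?thesis by simp
  qed
  have "Phi k \<alpha> r p n S \<le> (2 ^ n * exp (- (\<eta>3 * real n * ln d))) * exp (r * real n * ln d * ln (1 / (1 - p)))"
    unfolding Phi_def using Bb Wb Wb2 B0 W0 by (metis mult_mono exp_ge_zero mult_nonneg_nonneg zero_le_numeral zero_le_power)
  also have "\<dots> = 2 ^ n * exp (- ((\<eta>3 - r * ln (1 / (1 - p))) * real n * ln d))"
    by (simp add: mult.assoc exp_add[symmetric] algebra_simps)
  finally show "Phi k \<alpha> r p n S \<le> 2 ^ n * exp (- ((\<eta>3 - r * ln (1 / (1 - p))) * real n * ln (dd \<alpha> n)))"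
    using d_def by simp
  show "0 \<le> Phi k \<alpha> r p n S" unfolding Phi_def using B0 W0 by simp
qed

theorem lemma4p10:
  fixes k :: nat and \<alpha> r p \<eta>2 \<eta>3 \<mu> :: real
  assumes "k \<ge> 2" and "\<alpha> > 0" and "r > 0" and "0 < p" and "p < 1"
    and "(2 * real k - 1) * \<alpha> > 1" and "real k * \<alpha> \<le> 1"
    and "real k \<ge> (1 / (1 - p)) * ln (1 / (1 - p)) / (1 / (1 - p) - 1)"
    and "r < 1 / ln (1 / (1 - p))"
    and "0 < \<eta>2" and "\<eta>2 < \<eta>3" and "\<eta>3 < 1"
    and "(((2 * real k - 1) * \<alpha> - 1) / (2 * (real k - 1))) / \<alpha> - \<mu> * \<eta>2 ^ (k - 1) > 0"
    and "\<mu> > real k * p * r / (1 - p)"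
    and "r * ln (1 - p) + \<eta>3 > 0"
  shows "(\<lambda>n::nat. \<Sum>S\<in>{S::nat. real n * \<eta>3 \<le> real S \<and> S \<le> n}. Phi k \<alpha> r p n S)
           \<longlonglongrightarrow> 0"
proof -
  define c where "c = \<eta>3 - r * ln (1 / (1 - p))"
  have c0: "c > 0" using assms(4,5,15) unfolding c_def by (simp add: ln_div)
  have lim: "filterlim (\<lambda>n::nat. real n powr \<alpha>) at_top sequentially"
    using assms(2) by real_asymp
  have ev: "eventually (\<lambda>n::nat. real n powr \<alpha> \<ge> max 1 (1 / \<eta>3)) sequentially"
    using lim unfolding filterlim_at_top by (rule allE)
  have g: "(\<lambda>n::nat. (real n + 1) * 2 ^ n * exp (- (c * real n * (\<alpha> * ln (real n))))) \<longlonglongrightarrow> 0"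
    using c0 assms(2) by real_asymp
  let ?F = "\<lambda>n::nat. \<Sum>S\<in>{S::nat. real n * \<eta>3 \<le> real S \<and> S \<le> n}. Phi k \<alpha> r p n S"
  have ev2: "eventually (\<lambda>n. 0 \<le> ?F n \<and> ?F n \<le> (real n + 1) * 2 ^ n * exp (- (c * real n * (\<alpha> * ln (real n))))) sequentially"
    using ev eventually_gt_at_top[of 0]
  proof eventually_elim
    case (elim n)
    have d1: "dd \<alpha> n \<ge> 1" using elim unfolding dd_def by simp
    have d2: "1 / dd \<alpha> n \<le> \<eta>3" using elim assms(10,11) unfolding dd_def
      by (auto simp: divide_le_eq mult.commute intro: order_trans)
    have lnd: "ln (dd \<alpha> n) = \<alpha> * ln (real n)" unfolding dd_def using elim by (simp add: ln_powr)
    let ?A = "{S::nat. real n * \<eta>3 \<le> real S \<and> S \<le> n}"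
    have sub: "?A \<subseteq> {..n}" by auto
    have fin: "finite ?A" using finite_subset[OF sub] by simp
    have card: "real (card ?A) \<le> real n + 1"
      using card_mono[OF _ sub] by simp
    have "?F n \<le> (\<Sum>S\<in>?A. 2 ^ n * exp (- (c * real n * (\<alpha> * ln (real n)))))"
      apply (rule sum_mono)
      using term_bound(1)[OF assms(4,5,3) _ d1 d2] elim lnd unfolding c_def by auto
    also have "\<dots> = real (card ?A) * (2 ^ n * exp (- (c * real n * (\<alpha> * ln (real n)))))" by simp
    also have "\<dots> \<le> (real n + 1) * (2 ^ n * exp (- (c * real n * (\<alpha> * ln (real n)))))"
      using card by (intro mult_right_mono) auto
    finally have up: "?F n \<le> (real n + 1) * 2 ^ n * exp (- (c * real n * (\<alpha> * ln (real n))))"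
      by (simp add: mult.assoc)
    have "0 \<le> ?F n"
      apply (rule sum_nonneg)
      using term_bound(2)[OF assms(4,5,3) _ d1 d2] elim by auto
    with up show ?case by simp
  qed
  show ?thesis
    by (rule tendsto_sandwich[OF _ _ tendsto_const g]) (use ev2 in \<open>auto elim: eventually_mono\<close>)
qed

end
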